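(* There exists $\mathcal{G}\subseteq C(\mathbb{R},\mathbb{R})$ such that $\mathcal{K}_\mathcal{G}$ contains every nonempty hereditary family $\mathcal{E}\subseteq\mathrm{CL}(\mathbb{R})$.
   Context: $\mathrm{CL}(\mathbb{R})$ denotes the family of all closed subsets of $\mathbb{R}$ and $C(\mathbb{R},\mathbb{R})$ the set of all continuous functions $\mathbb{R}\to\mathbb{R}$. For $\mathcal{G}\subseteq C(\mathbb{R},\mathbb{R})$ let $R_\mathcal{G}=\{(f,E)\in C(\mathbb{R},\mathbb{R})\times\mathrm{CL}(\mathbb{R}):(\exists g\in\mathcal{G})\, f\restriction E=g\restriction E\}$. For $\mathcal{F}\subseteq C(\mathbb{R},\mathbb{R})$ put $E_\mathcal{G}(\mathcal{F})=\{E\in\mathrm{CL}(\mathbb{R}):(\forall f\in\mathcal{F})\,(f,E)\in R_\mathcal{G}\}$, and let $\mathcal{K}_\mathcal{G}=\{E_\mathcal{G}(\mathcal{F}):\mathcal{F}\subseteq C(\mathbb{R},\mathbb{R})\}$. A family $\mathcal{E}\subseteq\mathrm{CL}(\mathbb{R})$ is hereditary if for all $D,E\in\mathrm{CL}(\mathbb{R})$, $D\subseteq E\in\mathcal{E}$ implies $D\in\mathcal{E}$. *)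

theory Defs
  imports "HOL-Analysis.Analysis"
begin

definition CL :: "real set set" where
  "CL = {E. closed E}"

definition Cfun :: "(real \<Rightarrow> real) set" where
  "Cfun = {f. continuous_on UNIV f}"

definition R_G :: "(real \<Rightarrow> real) set \<Rightarrow> ((real \<Rightarrow> real) \<times> real set) set" where
  "R_G G = {(f, E). f \<in> Cfun \<and> E \<in> CL \<and> (\<exists>g\<in>G. \<forall>x\<in>E. f x = g x)}"

definition E_G :: "(real \<Rightarrow> real) set \<Rightarrow> (real \<Rightarrow> real) set \<Rightarrow> real set set" where
  "E_G G F = {E \<in> CL. \<forall>f\<in>F. (f, E) \<in> R_G G}"

definition K_G :: "(real \<Rightarrow> real) set \<Rightarrow> real set set set" where
  "K_G G = {E_G G F | F. F \<subseteq> Cfun}"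

definition hereditary :: "real set set \<Rightarrow> bool" where
  "hereditary \<E> \<longleftrightarrow> (\<forall>D E. D \<in> CL \<longrightarrow> E \<in> CL \<longrightarrow> D \<subseteq> E \<longrightarrow> E \<in> \<E> \<longrightarrow> D \<in> \<E>)"

end

theory Submission
  imports Defs
begin

definition rq :: "nat \<Rightarrow> real" where "rq = from_nat_into \<rat>"

definition trm :: "real set \<Rightarrow> nat \<Rightarrow> real" where
  "trm D n = (1/2)^n * min 1 (infdist (rq n) D)"

definition mu :: "real set \<Rightarrow> real" where "mu D = suminf (trm D)"

lemma rq_dense: "\<exists>n. \<bar>rq n - x\<bar> < d" if "d > 0" for x d :: real
proof -
  have "x - d < x + d" using that by simp
  then obtain q where q: "q \<in> \<rat>" "x - d < q" "q < x + d" using Rats_dense_in_real[of "x - d" "x + d"] by blast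
  have "q \<in> range rq" unfolding rq_def using q(1) countable_rat
    by (metis Rats_0 empty_iff range_from_nat_into)
  then obtain n where "q = rq n" by auto
  thus ?thesis using q by (intro exI[of _ n]) auto
qed

lemma trm_bound: "\<bar>trm D n\<bar> \<le> (1/2)^n"
  unfolding trm_def using infdist_nonneg[of "rq n" D] by (auto simp: abs_mult)

lemma summable_trm: "summable (trm D)"
  by (rule summable_comparison_test'[where g="\<lambda>n. (1/2)^n" and N=0]) (use trm_bound in auto)

lemma geo2: "(\<Sum>n. (1/2::real)^n) = 2"
  using suminf_geometric[of "1/2::real"] by simp

lemma key:
  assumes D: "closed D" "D \<noteq> {}" and x: "x \<in> D" and e: "e > 0"
    and D': "closed D'" "D' \<noteq> {}"
    and eq: "\<forall>y\<in>D'. - mu D + 3 * infdist y D + max 0 (e - \<bar>y - x\<bar>) = - mu D'"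
  shows False
proof -
  define \<Delta> where "\<Delta> = mu D - mu D'"
  have b1: "3 * infdist y D \<le> \<Delta>" and b2: "max 0 (e - \<bar>y - x\<bar>) \<le> \<Delta>" if "y \<in> D'" for y
    using eq that infdist_nonneg[of y D] unfolding \<Delta>_def by (smt (verit))+
  obtain y0 where y0: "y0 \<in> D'" using D' by auto
  have d0: "\<Delta> \<ge> 0" using b1[OF y0] infdist_nonneg[of y0 D] by simp
  have tri: "infdist q D \<le> infdist q D' + \<Delta>/3" for q
  proof -
    have "infdist q D - \<Delta>/3 \<le> infdist q D'"
      unfolding infdist_notempty[OF D'(2)]
    proof (rule cINF_greatest[OF D'(2)])
      fix y assume y: "y \<in> D'"
      have "infdist q D \<le> infdist y D + dist q y" by (rule infdist_triangle)
      thus "infdist q D - \<Delta> / 3 \<le> dist q y" using b1[OF y] by simp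
    qed
    thus ?thesis by simp
  qed
  have "mu D \<le> (\<Sum>n. trm D' n + (\<Delta>/3) * (1/2)^n)"
    unfolding mu_def
  proof (rule suminf_le)
    fix n
    have "min 1 (infdist (rq n) D) \<le> min 1 (infdist (rq n) D') + \<Delta>/3"
      using tri[of "rq n"] d0 by linarith
    hence "(1/2)^n * min 1 (infdist (rq n) D) \<le> (1/2)^n * (min 1 (infdist (rq n) D') + \<Delta>/3)"
      by (intro mult_left_mono) auto
    thus "trm D n \<le> trm D' n + \<Delta> / 3 * (1 / 2) ^ n" unfolding trm_def by (simp add: algebra_simps)
  qed (auto intro!: summable_add summable_mult summable_trm summable_trm)
  also have "\<dots> = mu D' + (\<Delta>/3) * 2"
  proof -
    have "(\<Sum>n. (\<Delta>/3) * (1/2)^n) = (\<Delta>/3) * 2"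
      using suminf_mult[of "\<lambda>n. (1/2::real)^n" "\<Delta>/3"] geo2 by simp
    moreover have "summable (\<lambda>n. (\<Delta>/3) * (1/2::real)^n)" by (intro summable_mult) simp
    ultimately show ?thesis
      by (subst suminf_add[symmetric]) (auto simp: mu_def summable_trm)
  qed
  finally have "\<Delta> \<le> 0" unfolding \<Delta>_def by (simp add: field_simps)
  hence d00: "\<Delta> = 0" using d0 by simp
  have sub: "D' \<subseteq> D"
  proof
    fix y assume "y \<in> D'"
    hence "infdist y D = 0" using b1[of y] d00 infdist_nonneg[of y D] by simp
    thus "y \<in> D" using in_closed_iff_infdist_zero[OF D] by simp
  qed
  have far: "e \<le> \<bar>y - x\<bar>" if "y \<in> D'" for y using b2[OF that] d00 by simp
  define \<delta> where "\<delta> = min 1 e / 2"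
  have dp: "\<delta> > 0" using e by (simp add: \<delta>_def)
  obtain n where n: "\<bar>rq n - x\<bar> < \<delta>" using rq_dense[OF dp] by auto
  have lt1: "infdist (rq n) D < \<delta>" using infdist_le[OF x, of "rq n"] n by (simp add: dist_real_def)
  have "\<delta> \<le> infdist (rq n) D'"
    unfolding infdist_notempty[OF D'(2)]
  proof (rule cINF_greatest[OF D'(2)])
    fix y assume "y \<in> D'"
    hence "e \<le> \<bar>y - x\<bar>" by (rule far)
    thus "\<delta> \<le> dist (rq n) y" using n unfolding dist_real_def \<delta>_def by linarith
  qed
  hence strict: "min 1 (infdist (rq n) D) < min 1 (infdist (rq n) D')"
    using lt1 by (simp add: \<delta>_def min_def split: if_splits)
  have "0 < (\<Sum>m. trm D' m - trm D m)"
  proof (rule suminf_pos2[where i=n])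
    show "summable (\<lambda>m. trm D' m - trm D m)" by (intro summable_diff summable_trm)
    fix m
    have "infdist (rq m) D \<le> infdist (rq m) D'" by (rule infdist_mono[OF sub D'(2)])
    hence "min 1 (infdist (rq m) D) \<le> min 1 (infdist (rq m) D')" by linarith
    thus "0 \<le> trm D' m - trm D m" unfolding trm_def by (simp add: mult_left_mono)
  next
    show "0 < trm D' n - trm D n" unfolding trm_def using strict by simp
  qed
  also have "\<dots> = mu D' - mu D" unfolding mu_def by (subst suminf_diff) (auto intro: summable_trm)
  finally show False using d00 unfolding \<Delta>_def by simp
qed

definition GG :: "(real \<Rightarrow> real) set" where
  "GG = {g \<in> Cfun. \<not> (\<exists>D'. closed D' \<and> D' \<noteq> {} \<and> (\<forall>y\<in>D'. g y = - mu D'))}"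

definition fD :: "real set \<Rightarrow> real \<Rightarrow> real" where
  "fD D = (\<lambda>y. - mu D + 3 * infdist y D)"

lemma fD_C: "fD D \<in> Cfun"
  unfolding fD_def Cfun_def by (auto intro!: continuous_intros)

theorem theorem2p6:
  shows "\<exists>G. G \<subseteq> Cfun \<and>
           (\<forall>\<E>. \<E> \<subseteq> CL \<and> \<E> \<noteq> {} \<and> hereditary \<E> \<longrightarrow> \<E> \<in> K_G G)"
proof (intro exI[of _ GG] conjI allI impI)
  show "GG \<subseteq> Cfun" unfolding GG_def by auto
  fix \<E> assume H: "\<E> \<subseteq> CL \<and> \<E> \<noteq> {} \<and> hereditary \<E>"
  have emp: "{} \<in> \<E>"
  proof -
    obtain E0 where "E0 \<in> \<E>" using H by auto
    thus ?thesis using H unfolding hereditary_def CL_def by auto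
  qed
  define F where "F = {fD D | D. closed D \<and> D \<notin> \<E>}"
  have "E_G GG F = \<E>"
  proof
    show "E_G GG F \<subseteq> \<E>"
    proof
      fix E assume E: "E \<in> E_G GG F"
      show "E \<in> \<E>"
      proof (rule ccontr)
        assume nE: "E \<notin> \<E>"
        have cE: "closed E" using E unfolding E_G_def CL_def by auto
        have "fD E \<in> F" unfolding F_def using cE nE by auto
        then obtain g where g: "g \<in> GG" "\<forall>y\<in>E. fD E y = g y"
          using E unfolding E_G_def R_G_def by auto
        have "E \<noteq> {}" using nE emp by auto
        moreover have "\<forall>y\<in>E. g y = - mu E" using g(2) unfolding fD_def by simp
        ultimately show False using g(1) cE unfolding GG_def by auto
      qed
    qed
  next
    show "\<E> \<subseteq> E_G GG F"
    proof
      fix E assume E: "E \<in> \<E>"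
      have cE: "closed E" using E H unfolding CL_def by auto
      have "(f, E) \<in> R_G GG" if f: "f \<in> F" for f
      proof -
        obtain D where D: "f = fD D" "closed D" "D \<notin> \<E>" using f unfolding F_def by auto
        have Dne: "D \<noteq> {}" using D emp by auto
        have "\<not> D \<subseteq> E" using H E D unfolding hereditary_def CL_def by blast
        then obtain x where x: "x \<in> D" "x \<notin> E" by auto
        obtain e where e: "e > 0" "ball x e \<subseteq> - E"
          using cE x(2) open_contains_ball[of "- E"] by (auto simp: closed_def)
        define g where "g = (\<lambda>y. - mu D + 3 * infdist y D + max 0 (e - \<bar>y - x\<bar>))"
        have gC: "g \<in> Cfun" unfolding g_def Cfun_def by (auto intro!: continuous_intros)
        have "g \<in> GG" using gC key[OF D(2) Dne x(1) e(1)] unfolding GG_def g_def by auto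
        moreover have "\<forall>y\<in>E. f y = g y"
        proof
          fix y assume "y \<in> E"
          hence "y \<notin> ball x e" using e(2) by blast
          hence "\<not> \<bar>y - x\<bar> < e" by (simp add: dist_real_def abs_minus_commute)
          thus "f y = g y" unfolding D(1) fD_def g_def by simp
        qed
        ultimately show ?thesis unfolding R_G_def using fD_C D(1) cE by (auto simp: CL_def)
      qed
      thus "E \<in> E_G GG F" unfolding E_G_def using cE by (auto simp: CL_def)
    qed
  qed
  moreover have "F \<subseteq> Cfun" unfolding F_def using fD_C by auto
  ultimately show "\<E> \<in> K_G GG" unfolding K_G_def by auto
qed

end
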